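(* Let $X\in\mathbb{R}^{n\times d}$, $y\in\mathbb{R}^n$, and let $g:\mathbb{R}^d\to(-\infty,\infty]$ be a proper lower semicontinuous convex function with $g(k\beta)=kg(\beta)$ for all $k\ge0$, $\beta\in\mathbb{R}^d$, such that there exists $\beta\in\mathrm{relint}(\mathrm{dom}(g))$ and $P(\beta):=\frac12\|y-X\beta\|_2^2+g(\beta)$ attains its infimum. Let $f(z)=\frac12\|y-z\|_2^2$, so $-f^\star(-\theta)=-\frac12\|\theta\|_2^2+y^\top\theta$, let $D(\theta)=-f^\star(-\theta)-g^\star(X^\top\theta)$, and let $\hat\theta$ be a maximizer of $D$. For $\tilde\beta\in\mathbb{R}^d$ define \[ u^{\mathrm{GM}}(\theta;\tilde\beta)=\begin{cases}-f^\star(-\theta) & \text{if } -f^\star(-\theta)\le P(\tilde\beta),\\ -\infty & \text{if } -f^\star(-\theta)>P(\tilde\beta).\end{cases} \] Then for all $\tilde\beta\in\mathbb{R}^d$, $\tilde\theta\in\mathrm{dom}(D)$ and $\theta\in\mathbb{R}^n$ we have $D(\theta)\le u^{\mathrm{GM}}(\theta;\tilde\beta)$, and hence \[ \hat\theta\in\{\theta\mid l(\theta;\tilde\theta)\le u^{\mathrm{GM}}(\theta;\tilde\beta)\}=\{\theta\mid -f^\star(-\theta)\le P(\tilde\beta)\ \land\ (\tilde\theta-\theta)^\top(y-\theta)\le0\}, \] where $l(\theta;\tilde\theta)=\frac12\|\theta-\tilde\theta\|_2^2+D(\tilde\theta)$.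
   Context: $h^\star(v)=\sup_z v^\top z-h(z)$ is the Fenchel conjugate; $\mathrm{dom}(h)=\{z:|h(z)|<\infty\}$; $\mathrm{relint}$ is relative interior. *)

theory Defs
  imports "HOL-Analysis.Analysis"
begin

definition fconj :: "('a::real_inner \<Rightarrow> ereal) \<Rightarrow> 'a \<Rightarrow> ereal" where
  "fconj h v = (SUP z. ereal (v \<bullet> z) - h z)"

definition edom :: "('a \<Rightarrow> ereal) \<Rightarrow> 'a set" where
  "edom h = {z. \<bar>h z\<bar> < \<infinity>}"

definition eproper :: "('a \<Rightarrow> ereal) \<Rightarrow> bool" where
  "eproper h \<longleftrightarrow> (\<forall>z. h z \<noteq> -\<infinity>) \<and> (\<exists>z. h z \<noteq> \<infinity>)"

definition econvex :: "('a::real_vector \<Rightarrow> ereal) \<Rightarrow> bool" where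
  "econvex h \<longleftrightarrow> (\<forall>x y t. 0 < t \<and> t < 1 \<longrightarrow>
      h (t *\<^sub>R x + (1 - t) *\<^sub>R y) \<le> ereal t * h x + ereal (1 - t) * h y)"

definition elsc :: "('a::topological_space \<Rightarrow> ereal) \<Rightarrow> bool" where
  "elsc h \<longleftrightarrow> (\<forall>x. h x \<le> Liminf (at x) h)"

end

theory Submission
  imports Defs
begin

lemma conj_quad:
  fixes y th :: "'a::real_inner"
  assumes f_def: "\<And>z. f z = ereal (1/2 * (norm (y - z))\<^sup>2)"
  shows "fconj f (- th) = ereal (1/2 * (norm th)\<^sup>2 - th \<bullet> y)"
proof -
  have le: "ereal ((- th) \<bullet> z) - f z \<le> ereal (1/2 * (norm th)\<^sup>2 - th \<bullet> y)" for z
  proof -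
    have "0 \<le> 1/2 * (norm (th + z - y))\<^sup>2" by simp
    also have "1/2 * (norm (th + z - y))\<^sup>2 = 1/2 * (norm th)\<^sup>2 + th \<bullet> (z - y) + 1/2 * (norm (y - z))\<^sup>2"
      by (simp add: power2_norm_eq_inner algebra_simps inner_commute)
    finally show ?thesis using f_def[of z] by (simp add: inner_diff_right)
  qed
  have eq: "ereal ((- th) \<bullet> (y - th)) - f (y - th) = ereal (1/2 * (norm th)\<^sup>2 - th \<bullet> y)"
    using f_def[of "y - th"] by (simp add: power2_norm_eq_inner algebra_simps inner_commute)
  show ?thesis unfolding fconj_def
    by (rule antisym, rule SUP_least, rule le, subst eq[symmetric], rule SUP_upper, simp)
qed

lemma conj_hom:
  fixes g :: "'a::real_inner \<Rightarrow> ereal"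
  assumes g_proper: "eproper g"
    and g_hom: "\<And>k \<beta>. k \<ge> 0 \<Longrightarrow> g (k *\<^sub>R \<beta>) = ereal k * g \<beta>"
  shows "fconj g v = (if \<forall>z. ereal (v \<bullet> z) \<le> g z then 0 else \<infinity>)"
proof -
  have "g 0 = ereal 0 * g 0" using g_hom[of 0 0] by simp
  also have "ereal 0 * g 0 = 0" by (simp only: zero_ereal_def[symmetric] ereal_zero_mult)
  finally have g0: "g 0 = 0" .
  have nm: "g z \<noteq> -\<infinity>" for z using g_proper unfolding eproper_def by auto
  show ?thesis
  proof (cases "\<forall>z. ereal (v \<bullet> z) \<le> g z")
    case True
    have "fconj g v = 0" unfolding fconj_def
    proof (rule antisym)
      show "(SUP z. ereal (v \<bullet> z) - g z) \<le> 0"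
      proof (rule SUP_least)
        fix z
        show "ereal (v \<bullet> z) - g z \<le> 0"
          using True[rule_format, of z] nm[of z]
          by (cases "g z") auto
      qed
      have "ereal (v \<bullet> 0) - g 0 = 0" using g0 by simp
      then show "0 \<le> (SUP z. ereal (v \<bullet> z) - g z)"
        using SUP_upper[of 0 UNIV "\<lambda>z. ereal (v \<bullet> z) - g z"] by simp
    qed
    then show ?thesis using True by simp
  next
    case False
    then obtain z where z: "ereal (v \<bullet> z) > g z" by (auto simp: not_le)
    then obtain r where r: "g z = ereal r" using nm[of z] by (cases "g z") auto
    with z have lt: "r < v \<bullet> z" by simp
    have "fconj g v = \<infinity>"
    proof (rule ereal_top)
      fix B
      define k where "k = \<bar>B\<bar> / (v \<bullet> z - r)"
      have k0: "k \<ge> 0" using lt by (simp add: k_def)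
      have "B \<le> k * (v \<bullet> z - r)" using lt by (simp add: k_def)
      also have "k * (v \<bullet> z - r) = v \<bullet> (k *\<^sub>R z) - k * r" by (simp add: algebra_simps)
      finally have "ereal B \<le> ereal (v \<bullet> (k *\<^sub>R z)) - g (k *\<^sub>R z)"
        using g_hom[OF k0, of z] r by simp
      also have "\<dots> \<le> fconj g v" unfolding fconj_def by (rule SUP_upper) simp
      finally show "ereal B \<le> fconj g v" .
    qed
    then show ?thesis using False by simp
  qed
qed


lemma var_ineq:
  fixes a b :: real
  assumes H: "\<And>t. 0 < t \<Longrightarrow> t \<le> 1 \<Longrightarrow> t*a - t^2/2 * b \<le> 0" and b: "b \<ge> 0"
  shows "a \<le> 0"
proof (rule ccontr)
  assume "\<not> a \<le> 0" then have a: "a > 0" by simp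
  define t where "t = min 1 (a/(b+1))"
  have t0: "t > 0" using a b by (simp add: t_def)
  have t1: "t \<le> 1" by (simp add: t_def)
  have "t * b \<le> a/(b+1) * b" using b by (intro mult_right_mono) (auto simp: t_def)
  also have "\<dots> < a" using a b by (simp add: field_simps)
  finally have "t*b < a" .
  moreover have "t*b \<ge> 0" using t0 b by simp
  ultimately have "a - t/2*b > 0" by simp
  then have "t * (a - t/2*b) > 0" using t0 by simp
  moreover have "t * (a - t/2*b) = t*a - t^2/2*b" by (simp add: power2_eq_square algebra_simps)
  ultimately show False using H[OF t0 t1] by simp
qed

lemma quad_expand:
  fixes y th d :: "'a::real_inner" and t :: real
  shows "y \<bullet> (th + t *\<^sub>R d) - 1/2 * (norm (th + t *\<^sub>R d))\<^sup>2
    = (y \<bullet> th - 1/2 * (norm th)\<^sup>2) + (t * (d \<bullet> (y - th)) - t^2/2 * (norm d)\<^sup>2)"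
  unfolding power2_norm_eq_inner
  by (simp add: inner_add_left inner_add_right inner_diff_right
      power2_eq_square algebra_simps inner_commute)

theorem theorem9:
  fixes X :: "real ^ 'd ^ 'n" and y :: "real ^ 'n"
    and g :: "real ^ 'd \<Rightarrow> ereal"
    and f :: "real ^ 'n \<Rightarrow> ereal"
    and P :: "real ^ 'd \<Rightarrow> ereal"
    and D :: "real ^ 'n \<Rightarrow> ereal"
    and uGM :: "real ^ 'n \<Rightarrow> real ^ 'd \<Rightarrow> ereal"
    and l :: "real ^ 'n \<Rightarrow> real ^ 'n \<Rightarrow> ereal"
    and theta_hat :: "real ^ 'n"
  assumes g_proper: "eproper g" and g_lsc: "elsc g" and g_convex: "econvex g"
    and g_hom: "\<And>k \<beta>. k \<ge> 0 \<Longrightarrow> g (k *\<^sub>R \<beta>) = ereal k * g \<beta>"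
    and relint_ne: "\<exists>\<beta>. \<beta> \<in> rel_interior (edom g)"
    and P_def: "\<And>\<beta>. P \<beta> = ereal (1/2 * (norm (y - X *v \<beta>))\<^sup>2) + g \<beta>"
    and P_attains: "\<exists>\<beta>0. \<forall>\<beta>. P \<beta>0 \<le> P \<beta>"
    and f_def: "\<And>z. f z = ereal (1/2 * (norm (y - z))\<^sup>2)"
    and D_def: "\<And>\<theta>. D \<theta> = - fconj f (- \<theta>) - fconj g (transpose X *v \<theta>)"
    and theta_hat_max: "\<And>\<theta>. D \<theta> \<le> D theta_hat"
    and uGM_def: "\<And>\<theta> \<beta>t. uGM \<theta> \<beta>t =
        (if - fconj f (- \<theta>) \<le> P \<beta>t then - fconj f (- \<theta>) else -\<infinity>)"
    and l_def: "\<And>\<theta> \<theta>t. l \<theta> \<theta>t = ereal (1/2 * (norm (\<theta> - \<theta>t))\<^sup>2) + D \<theta>t"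
  shows "\<forall>\<beta>t \<theta>t. \<theta>t \<in> edom D \<longrightarrow>
           (\<forall>\<theta>. D \<theta> \<le> uGM \<theta> \<beta>t)
         \<and> theta_hat \<in> {\<theta>. l \<theta> \<theta>t \<le> uGM \<theta> \<beta>t}
         \<and> {\<theta>. l \<theta> \<theta>t \<le> uGM \<theta> \<beta>t}
             = {\<theta>. - fconj f (- \<theta>) \<le> P \<beta>t \<and> (\<theta>t - \<theta>) \<bullet> (y - \<theta>) \<le> 0}"
proof -
  define h where "h \<theta> = y \<bullet> \<theta> - 1/2 * (norm \<theta>)\<^sup>2" for \<theta> :: "real ^ 'n"
  define K where "K \<theta> \<longleftrightarrow> (\<forall>z. ereal ((transpose X *v \<theta>) \<bullet> z) \<le> g z)" for \<theta>
  have nm: "g z \<noteq> -\<infinity>" for z using g_proper unfolding eproper_def by auto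
  have mf: "- fconj f (- \<theta>) = ereal (h \<theta>)" for \<theta>
    using conj_quad[of f y \<theta>, OF f_def] by (simp add: h_def inner_commute)
  have Deq: "D \<theta> = (if K \<theta> then ereal (h \<theta>) else -\<infinity>)" for \<theta>
    using D_def[of \<theta>] mf[of \<theta>] conj_hom[OF g_proper g_hom, of "transpose X *v \<theta>"]
    by (simp add: K_def)
  have wd: "ereal (h \<theta>) \<le> P \<beta>" if "K \<theta>" for \<theta> \<beta>
  proof -
    have tb: "(transpose X *v \<theta>) \<bullet> \<beta> = \<theta> \<bullet> (X *v \<beta>)"
      by (simp add: dot_lmul_matrix)
    have "0 \<le> 1/2 * (norm (y - X *v \<beta> - \<theta>))\<^sup>2" by simp
    also have "1/2 * (norm (y - X *v \<beta> - \<theta>))\<^sup>2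
       = 1/2 * (norm (y - X *v \<beta>))\<^sup>2 + \<theta> \<bullet> (X *v \<beta>) - h \<theta>"
      unfolding h_def power2_norm_eq_inner
      by (simp add: inner_diff_left inner_diff_right algebra_simps inner_commute)
    finally have r: "h \<theta> \<le> 1/2 * (norm (y - X *v \<beta>))\<^sup>2 + \<theta> \<bullet> (X *v \<beta>)" by simp
    have "ereal (h \<theta>) \<le> ereal (1/2 * (norm (y - X *v \<beta>))\<^sup>2) + ereal (\<theta> \<bullet> (X *v \<beta>))"
      using r by simp
    also have "\<dots> \<le> ereal (1/2 * (norm (y - X *v \<beta>))\<^sup>2) + g \<beta>"
      using that[unfolded K_def, rule_format, of \<beta>] tb by (intro add_left_mono) simp
    finally show ?thesis using P_def[of \<beta>] by simp
  qed
  have Kconv: "K (a + t *\<^sub>R (b - a))" if "K a" "K b" "0 \<le> t" "t \<le> 1" for a b t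
    unfolding K_def
  proof
    fix z
    have lin: "(transpose X *v (a + t *\<^sub>R (b - a))) \<bullet> z
      = (1 - t) * ((transpose X *v a) \<bullet> z) + t * ((transpose X *v b) \<bullet> z)"
      by (simp add: matrix_vector_right_distrib matrix_vector_mult_diff_distrib
          matrix_vector_mult_scaleR inner_add_left inner_diff_left algebra_simps)
    show "ereal ((transpose X *v (a + t *\<^sub>R (b - a))) \<bullet> z) \<le> g z"
    proof (cases "g z")
      case (real r)
      have "(transpose X *v a) \<bullet> z \<le> r" "(transpose X *v b) \<bullet> z \<le> r"
        using that(1,2) real unfolding K_def by (metis ereal_less_eq(3))+
      then have "(1 - t) * ((transpose X *v a) \<bullet> z) + t * ((transpose X *v b) \<bullet> z)
          \<le> (1 - t) * r + t * r"
        using that(3,4) by (intro add_mono mult_left_mono) auto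
      then show ?thesis using lin real by (simp add: algebra_simps)
    qed (use nm in auto)
  qed
  show ?thesis
  proof (intro allI impI)
    fix \<beta>t \<theta>t
    assume "\<theta>t \<in> edom D"
    then have Kt: "K \<theta>t" unfolding edom_def using Deq[of \<theta>t] by (auto split: if_splits)
    have Dt: "D \<theta>t = ereal (h \<theta>t)" using Kt Deq by simp
    have part1: "\<forall>\<theta>. D \<theta> \<le> uGM \<theta> \<beta>t"
    proof
      fix \<theta>
      show "D \<theta> \<le> uGM \<theta> \<beta>t"
      proof (cases "K \<theta>")
        case True
        then show ?thesis using wd[OF True, of \<beta>t] Deq[of \<theta>] uGM_def[of \<theta> \<beta>t] mf[of \<theta>] by simp
      qed (simp add: Deq)
    qed
    have alg: "(1/2 * (norm (\<theta> - \<theta>t))\<^sup>2 + h \<theta>t \<le> h \<theta>) \<longleftrightarrow> (\<theta>t - \<theta>) \<bullet> (y - \<theta>) \<le> 0" for \<theta>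
    proof -
      have "h \<theta> - (1/2 * (norm (\<theta> - \<theta>t))\<^sup>2 + h \<theta>t) = - ((\<theta>t - \<theta>) \<bullet> (y - \<theta>))"
        unfolding h_def power2_norm_eq_inner
        by (simp add: inner_diff_left inner_diff_right algebra_simps inner_commute)
      then show ?thesis by linarith
    qed
    have part3: "{\<theta>. l \<theta> \<theta>t \<le> uGM \<theta> \<beta>t}
             = {\<theta>. - fconj f (- \<theta>) \<le> P \<beta>t \<and> (\<theta>t - \<theta>) \<bullet> (y - \<theta>) \<le> 0}"
    proof (intro set_eqI iffI; clarsimp)
      fix \<theta>
      assume a: "l \<theta> \<theta>t \<le> uGM \<theta> \<beta>t"
      have lt: "l \<theta> \<theta>t = ereal (1/2 * (norm (\<theta> - \<theta>t))\<^sup>2 + h \<theta>t)" using l_def Dt by simp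
      show "- fconj f (- \<theta>) \<le> P \<beta>t \<and> (\<theta>t - \<theta>) \<bullet> (y - \<theta>) \<le> 0"
      proof (cases "ereal (h \<theta>) \<le> P \<beta>t")
        case True
        then show ?thesis using a lt uGM_def[of \<theta> \<beta>t] mf[of \<theta>] alg[of \<theta>] by simp
      next
        case False
        then show ?thesis using a lt uGM_def[of \<theta> \<beta>t] mf[of \<theta>] by simp
      qed
    next
      fix \<theta>
      assume a: "- fconj f (- \<theta>) \<le> P \<beta>t" "(\<theta>t - \<theta>) \<bullet> (y - \<theta>) \<le> 0"
      have lt: "l \<theta> \<theta>t = ereal (1/2 * (norm (\<theta> - \<theta>t))\<^sup>2 + h \<theta>t)" using l_def Dt by simp
      show "l \<theta> \<theta>t \<le> uGM \<theta> \<beta>t"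
        using a lt uGM_def[of \<theta> \<beta>t] mf[of \<theta>] alg[of \<theta>] by simp
    qed
    have Kh: "K theta_hat"
      using theta_hat_max[of \<theta>t] Dt Deq[of theta_hat] by (auto split: if_splits)
    have hmax: "h \<theta> \<le> h theta_hat" if "K \<theta>" for \<theta>
      using theta_hat_max[of \<theta>] Deq[of \<theta>] Deq[of theta_hat] that Kh by simp
    have vi: "(\<theta>t - theta_hat) \<bullet> (y - theta_hat) \<le> 0"
    proof -
      let ?d = "\<theta>t - theta_hat"
      have "?d \<bullet> (y - theta_hat) \<le> 0"
      proof (rule var_ineq[where b = "(norm ?d)\<^sup>2"])
        fix t :: real assume t: "0 < t" "t \<le> 1"
        have "K (theta_hat + t *\<^sub>R ?d)" using Kconv[OF Kh Kt, of t] t by simp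
        then have "h (theta_hat + t *\<^sub>R ?d) \<le> h theta_hat" by (rule hmax)
        then show "t * (?d \<bullet> (y - theta_hat)) - t^2/2 * (norm ?d)\<^sup>2 \<le> 0"
          unfolding h_def quad_expand by simp
      qed simp
      then show ?thesis .
    qed
    have part2: "theta_hat \<in> {\<theta>. l \<theta> \<theta>t \<le> uGM \<theta> \<beta>t}"
      unfolding part3 using wd[OF Kh, of \<beta>t] mf[of theta_hat] vi by simp
    show "(\<forall>\<theta>. D \<theta> \<le> uGM \<theta> \<beta>t)
         \<and> theta_hat \<in> {\<theta>. l \<theta> \<theta>t \<le> uGM \<theta> \<beta>t}
         \<and> {\<theta>. l \<theta> \<theta>t \<le> uGM \<theta> \<beta>t}
             = {\<theta>. - fconj f (- \<theta>) \<le> P \<beta>t \<and> (\<theta>t - \<theta>) \<bullet> (y - \<theta>) \<le> 0}"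
      using part1 part2 part3 by blast
  qed
qed

end
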